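(* For $\mu\in\mathcal{B}$ define $T_\mu: B_{X_\mu^*}\to[-1,1]^V$ by $T_\mu(f)(0_V)=0$ and $T_\mu(f)(u)=f(u)/\mu(u)$ for $u\in V\setminus\{0_V\}$, and let $K_\mu=T_\mu(B_{X_\mu^*})$. Then the set $K=\{(\mu,g)\in\mathcal{B}\times[-1,1]^V: g\in K_\mu\}$ is closed in $\mathcal{B}\times[-1,1]^V$ (product topology, $[-1,1]^V$ with the product topology).
   Context: $V$ is the set of finitely supported rational sequences; $\mathcal{P}\subset\mathbb{R}^V$ the seminorms on $V$ with pointwise convergence topology; for $\mu\in\mathcal{P}$, $\bar\mu$ is its seminorm extension to $c_{00}$ and $X_\mu$ the completion of $c_{00}/\{\bar\mu=0\}$; $\mathcal{B}$ is the set of $\mu\in\mathcal{P}$ with $X_\mu$ infinite-dimensional and $\bar\mu$ a norm on $c_{00}$, with the subspace topology. For $\mu\in\mathcal{B}$, $V\subset c_{00}\subset X_\mu$ and $\mu(u)>0$ for $u\ne0_V$. *)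

theory Defs
  imports "HOL-Analysis.Analysis"
begin

definition VV :: "(nat \<Rightarrow> rat) set" where
  "VV = {u. finite {n. u n \<noteq> 0}}"

definition c00 :: "(nat \<Rightarrow> real) set" where
  "c00 = {x. finite {n. x n \<noteq> 0}}"

definition emb :: "(nat \<Rightarrow> rat) \<Rightarrow> (nat \<Rightarrow> real)" where
  "emb u = (\<lambda>n. of_rat (u n))"

definition RV_top :: "((nat \<Rightarrow> rat) \<Rightarrow> real) topology" where
  "RV_top = product_topology (\<lambda>_. euclideanreal) VV"

definition cube_top :: "((nat \<Rightarrow> rat) \<Rightarrow> real) topology" where
  "cube_top = product_topology (\<lambda>_. top_of_set {-1..1}) VV"

definition is_seminorm_V :: "((nat \<Rightarrow> rat) \<Rightarrow> real) \<Rightarrow> bool" where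
  "is_seminorm_V \<mu> \<longleftrightarrow>
     (\<forall>u\<in>VV. \<forall>v\<in>VV. \<mu> (\<lambda>n. u n + v n) \<le> \<mu> u + \<mu> v) \<and>
     (\<forall>u\<in>VV. \<forall>q::rat. \<mu> (\<lambda>n. q * u n) = \<bar>of_rat q\<bar> * \<mu> u)"

definition PP :: "((nat \<Rightarrow> rat) \<Rightarrow> real) set" where
  "PP = {\<mu> \<in> topspace RV_top. is_seminorm_V \<mu>}"

definition is_seminorm_c00 :: "((nat \<Rightarrow> real) \<Rightarrow> real) \<Rightarrow> bool" where
  "is_seminorm_c00 \<nu> \<longleftrightarrow>
     (\<forall>x\<in>c00. \<forall>y\<in>c00. \<nu> (\<lambda>n. x n + y n) \<le> \<nu> x + \<nu> y) \<and>
     (\<forall>x\<in>c00. \<forall>a::real. \<nu> (\<lambda>n. a * x n) = \<bar>a\<bar> * \<nu> x) \<and>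
     (\<forall>x. x \<notin> c00 \<longrightarrow> \<nu> x = 0)"

text \<open>The seminorm extension of mu to c00 (unique, since every seminorm on a
  finite-dimensional real space is continuous and V is dense there).\<close>
definition mu_bar :: "((nat \<Rightarrow> rat) \<Rightarrow> real) \<Rightarrow> ((nat \<Rightarrow> real) \<Rightarrow> real)" where
  "mu_bar \<mu> = (THE \<nu>. is_seminorm_c00 \<nu> \<and> (\<forall>u\<in>VV. \<nu> (emb u) = \<mu> u))"

text \<open>X_mu infinite-dimensional, i.e. c00 / ker(mu_bar) (dense in X_mu) has
  arbitrarily large linearly independent families.\<close>
definition X_inf_dim :: "((nat \<Rightarrow> rat) \<Rightarrow> real) \<Rightarrow> bool" where
  "X_inf_dim \<mu> \<longleftrightarrow>
     (\<forall>m::nat. \<exists>x :: nat \<Rightarrow> (nat \<Rightarrow> real). (\<forall>i<m. x i \<in> c00) \<and>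
        (\<forall>c :: nat \<Rightarrow> real. mu_bar \<mu> (\<lambda>k. \<Sum>i<m. c i * x i k) = 0 \<longrightarrow> (\<forall>i<m. c i = 0)))"

definition BB :: "((nat \<Rightarrow> rat) \<Rightarrow> real) set" where
  "BB = {\<mu> \<in> PP. X_inf_dim \<mu> \<and> (\<forall>x\<in>c00. mu_bar \<mu> x = 0 \<longrightarrow> x = (\<lambda>_. 0))}"

text \<open>Unit ball of X_mu^*, identified with the real-linear functionals on c00
  bounded by mu_bar (each extends uniquely to X_mu, c00 being dense).\<close>
definition dual_ball :: "((nat \<Rightarrow> rat) \<Rightarrow> real) \<Rightarrow> ((nat \<Rightarrow> real) \<Rightarrow> real) set" where
  "dual_ball \<mu> = {f. (\<forall>x\<in>c00. \<forall>y\<in>c00. \<forall>a b::real.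
                        f (\<lambda>n. a * x n + b * y n) = a * f x + b * f y) \<and>
                     (\<forall>x\<in>c00. \<bar>f x\<bar> \<le> mu_bar \<mu> x)}"

definition T_op :: "((nat \<Rightarrow> rat) \<Rightarrow> real) \<Rightarrow> ((nat \<Rightarrow> real) \<Rightarrow> real) \<Rightarrow> ((nat \<Rightarrow> rat) \<Rightarrow> real)" where
  "T_op \<mu> f = (\<lambda>u\<in>VV. if u = (\<lambda>_. 0) then 0 else f (emb u) / \<mu> u)"

definition K_mu :: "((nat \<Rightarrow> rat) \<Rightarrow> real) \<Rightarrow> ((nat \<Rightarrow> rat) \<Rightarrow> real) set" where
  "K_mu \<mu> = T_op \<mu> ` dual_ball \<mu>"

definition KK :: "(((nat \<Rightarrow> rat) \<Rightarrow> real) \<times> ((nat \<Rightarrow> rat) \<Rightarrow> real)) set" where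
  "KK = {(\<mu>, g). \<mu> \<in> BB \<and> g \<in> topspace cube_top \<and> g \<in> K_mu \<mu>}"

end

theory Submission
  imports Defs
begin

definition unitQ :: "nat \<Rightarrow> nat \<Rightarrow> rat" where
  "unitQ i = (\<lambda>n. if n = i then 1 else 0)"

lemma sn_bound:
  fixes N :: "(nat \<Rightarrow> 'a::comm_ring_1) \<Rightarrow> real" and h :: "'a \<Rightarrow> real"
  assumes tri: "\<And>u v. finite {n. u n \<noteq> 0} \<Longrightarrow> finite {n. v n \<noteq> 0} \<Longrightarrow> N (\<lambda>n. u n + v n) \<le> N u + N v"
    and hom: "\<And>u a. finite {n. u n \<noteq> 0} \<Longrightarrow> N (\<lambda>n. a * u n) = h a * N u"
    and h0: "h 0 = 0"
    and S: "finite S" "{n. u n \<noteq> 0} \<subseteq> S"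
  shows "N u \<le> (\<Sum>n\<in>S. h (u n) * N (\<lambda>m. if m = n then 1 else 0))"
  using S
proof (induction S arbitrary: u rule: finite_induct)
  case empty
  then have "u = (\<lambda>n. 0 * u n)" by auto
  moreover have "finite {n. u n \<noteq> 0}" using empty by (simp)
  ultimately have "N u = h 0 * N u" using hom[of u 0] by simp
  then show ?case using h0 by simp
next
  case (insert i S u)
  define u' where "u' = (\<lambda>n. if n = i then 0 else u n)"
  define w where "w = (\<lambda>n. u i * (if n = i then 1 else (0::'a)))"
  have fu': "finite {n. u' n \<noteq> 0}" using insert(1,4) unfolding u'_def
    by (auto intro: rev_finite_subset)
  have fe: "finite {n. (if n = i then 1 else (0::'a)) \<noteq> 0}"
    by (rule rev_finite_subset[of "{i}"]) auto
  have u: "u = (\<lambda>n. u' n + w n)" unfolding u'_def w_def by auto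
  have fw: "finite {n. w n \<noteq> 0}" unfolding w_def
    by (rule rev_finite_subset[of "{i}"]) auto
  have "N u \<le> N u' + N w" using tri[OF fu' fw] u by simp
  also have "N w = h (u i) * N (\<lambda>m. if m = i then 1 else 0)" unfolding w_def by (rule hom[OF fe])
  also have "N u' \<le> (\<Sum>n\<in>S. h (u' n) * N (\<lambda>m. if m = n then 1 else 0))"
  proof (rule insert(3))
    show "{n. u' n \<noteq> 0} \<subseteq> S" using insert(4) unfolding u'_def by auto
  qed
  also have "(\<Sum>n\<in>S. h (u' n) * N (\<lambda>m. if m = n then 1 else 0)) = (\<Sum>n\<in>S. h (u n) * N (\<lambda>m. if m = n then 1 else 0))"
    using insert(2) unfolding u'_def by (intro sum.cong) auto
  finally show ?case using insert(1,2) by (simp add: add.commute)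
qed


definition LL :: "((nat \<Rightarrow> rat) \<Rightarrow> real) \<Rightarrow> (nat \<Rightarrow> real) \<Rightarrow> real" where
  "LL \<mu> d = (\<Sum>n\<in>{n. d n \<noteq> 0}. \<bar>d n\<bar> * \<mu> (unitQ n))"

lemma c00_lin: "x \<in> c00 \<Longrightarrow> y \<in> c00 \<Longrightarrow> (\<lambda>n. a * x n + b * y n) \<in> c00"
  unfolding c00_def mem_Collect_eq by (rule rev_finite_subset[of "{n. x n \<noteq> 0} \<union> {n. y n \<noteq> 0}"]) auto
lemma c00_add: "x \<in> c00 \<Longrightarrow> y \<in> c00 \<Longrightarrow> (\<lambda>n. x n + y n) \<in> c00"
  using c00_lin[of x y 1 1] by simp
lemma c00_diff: "x \<in> c00 \<Longrightarrow> y \<in> c00 \<Longrightarrow> (\<lambda>n. x n - y n) \<in> c00"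
  using c00_lin[of x y 1 "-1"] by simp
lemma c00_scale: "x \<in> c00 \<Longrightarrow> (\<lambda>n. a * x n) \<in> c00"
  unfolding c00_def mem_Collect_eq by (rule rev_finite_subset[of "{n. x n \<noteq> 0}"]) auto
lemma VV_lin: "x \<in> VV \<Longrightarrow> y \<in> VV \<Longrightarrow> (\<lambda>n. a * x n + b * y n) \<in> VV"
  unfolding VV_def mem_Collect_eq by (rule rev_finite_subset[of "{n. x n \<noteq> 0} \<union> {n. y n \<noteq> 0}"]) auto
lemma VV_add: "x \<in> VV \<Longrightarrow> y \<in> VV \<Longrightarrow> (\<lambda>n. x n + y n) \<in> VV"
  using VV_lin[of x y 1 1] by simp
lemma VV_diff: "x \<in> VV \<Longrightarrow> y \<in> VV \<Longrightarrow> (\<lambda>n. x n - y n) \<in> VV"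
  using VV_lin[of x y 1 "-1"] by simp
lemma VV_scale: "x \<in> VV \<Longrightarrow> (\<lambda>n. a * x n) \<in> VV"
  unfolding VV_def mem_Collect_eq by (rule rev_finite_subset[of "{n. x n \<noteq> 0}"]) auto
lemma VV_zero: "(\<lambda>_. 0) \<in> VV" unfolding VV_def by simp
lemma c00_zero: "(\<lambda>_. 0) \<in> c00" unfolding c00_def by simp
lemma supp_emb: "{n. emb u n \<noteq> 0} = {n. u n \<noteq> 0}" unfolding emb_def by auto
lemma emb_c00: "u \<in> VV \<Longrightarrow> emb u \<in> c00" unfolding c00_def VV_def using supp_emb[of u] by simp
lemma unitQ_VV: "unitQ i \<in> VV" unfolding VV_def unitQ_def mem_Collect_eq
  by (rule rev_finite_subset[of "{i}"]) auto
lemma emb_unitQ: "emb (unitQ i) = (\<lambda>m. if m = i then 1 else 0)"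
  unfolding emb_def unitQ_def by auto
lemma emb_lin: "emb (\<lambda>n. a * x n + b * y n) = (\<lambda>n. of_rat a * emb x n + of_rat b * emb y n)"
  unfolding emb_def by (simp add: of_rat_add of_rat_mult)
lemma emb_diff: "emb (\<lambda>n. x n - y n) = (\<lambda>n. emb x n - emb y n)"
  unfolding emb_def by (simp add: of_rat_diff)
lemma emb_zero: "emb (\<lambda>_. 0) = (\<lambda>_. 0)" unfolding emb_def by simp

lemma PP_sem: "\<mu> \<in> PP \<Longrightarrow> is_seminorm_V \<mu>" unfolding PP_def by simp

lemma mu_tri: "\<mu> \<in> PP \<Longrightarrow> u \<in> VV \<Longrightarrow> v \<in> VV \<Longrightarrow> \<mu> (\<lambda>n. u n + v n) \<le> \<mu> u + \<mu> v"
  using PP_sem unfolding is_seminorm_V_def by blast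
lemma mu_hom: "\<mu> \<in> PP \<Longrightarrow> u \<in> VV \<Longrightarrow> \<mu> (\<lambda>n. q * u n) = \<bar>of_rat q\<bar> * \<mu> u"
  using PP_sem unfolding is_seminorm_V_def by blast
lemma nu_tri: "is_seminorm_c00 \<nu> \<Longrightarrow> u \<in> c00 \<Longrightarrow> v \<in> c00 \<Longrightarrow> \<nu> (\<lambda>n. u n + v n) \<le> \<nu> u + \<nu> v"
  unfolding is_seminorm_c00_def by blast
lemma nu_hom: "is_seminorm_c00 \<nu> \<Longrightarrow> u \<in> c00 \<Longrightarrow> \<nu> (\<lambda>n. q * u n) = \<bar>q\<bar> * \<nu> u"
  unfolding is_seminorm_c00_def by blast

lemma mu_zero: assumes "\<mu> \<in> PP" shows "\<mu> (\<lambda>_. 0) = 0"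
  using mu_hom[OF assms VV_zero, of 0] by simp

lemma mu_nonneg: assumes "\<mu> \<in> PP" "u \<in> VV" shows "\<mu> u \<ge> 0"
proof -
  have s: "is_seminorm_V \<mu>" using PP_sem[OF assms(1)] .
  have m: "(\<lambda>n. (-1) * u n) \<in> VV" using VV_scale[OF assms(2)] .
  have "\<mu> (\<lambda>n. u n + (\<lambda>n. (-1) * u n) n) \<le> \<mu> u + \<mu> (\<lambda>n. (-1) * u n)"
    by (rule mu_tri[OF assms m])
  moreover have "\<mu> (\<lambda>n. (-1) * u n) = \<mu> u"
    using mu_hom[OF assms, of "-1"] by simp
  moreover have "(\<lambda>n. u n + (\<lambda>n. (-1) * u n) n) = (\<lambda>_. 0)" by simp
  ultimately show ?thesis using mu_zero[OF assms(1)] by simp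
qed

lemma unit_nonneg: "\<mu> \<in> PP \<Longrightarrow> \<mu> (unitQ n) \<ge> 0" using mu_nonneg unitQ_VV by blast

lemma LL_eq: assumes "finite S" "{n. d n \<noteq> 0} \<subseteq> S"
  shows "LL \<mu> d = (\<Sum>n\<in>S. \<bar>d n\<bar> * \<mu> (unitQ n))"
  unfolding LL_def by (rule sum.mono_neutral_left) (use assms in auto)

lemma LL_nonneg: "\<mu> \<in> PP \<Longrightarrow> LL \<mu> d \<ge> 0"
  unfolding LL_def by (intro sum_nonneg mult_nonneg_nonneg) (auto simp: unit_nonneg)

lemma LL_zero: "LL \<mu> (\<lambda>_. 0) = 0" unfolding LL_def by simp

lemma LL_add: assumes "\<mu> \<in> PP" "x \<in> c00" "y \<in> c00"
  shows "LL \<mu> (\<lambda>n. x n + y n) \<le> LL \<mu> x + LL \<mu> y"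
proof -
  let ?S = "{n. x n \<noteq> 0} \<union> {n. y n \<noteq> 0}"
  have f: "finite ?S" using assms unfolding c00_def by simp
  have "LL \<mu> (\<lambda>n. x n + y n) = (\<Sum>n\<in>?S. \<bar>x n + y n\<bar> * \<mu> (unitQ n))"
    by (rule LL_eq[OF f]) auto
  also have "\<dots> \<le> (\<Sum>n\<in>?S. \<bar>x n\<bar> * \<mu> (unitQ n) + \<bar>y n\<bar> * \<mu> (unitQ n))"
  proof (intro sum_mono)
    fix n have "\<bar>x n + y n\<bar> * \<mu> (unitQ n) \<le> (\<bar>x n\<bar> + \<bar>y n\<bar>) * \<mu> (unitQ n)"
      by (intro mult_right_mono abs_triangle_ineq unit_nonneg assms(1))
    then show "\<bar>x n + y n\<bar> * \<mu> (unitQ n) \<le> \<bar>x n\<bar> * \<mu> (unitQ n) + \<bar>y n\<bar> * \<mu> (unitQ n)"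
      by (simp add: distrib_right)
  qed
  also have "\<dots> = LL \<mu> x + LL \<mu> y"
    by (simp add: sum.distrib LL_eq[OF f])
  finally show ?thesis .
qed

lemma LL_scale: assumes "x \<in> c00"
  shows "LL \<mu> (\<lambda>n. a * x n) = \<bar>a\<bar> * LL \<mu> x"
proof -
  let ?S = "{n. x n \<noteq> 0}"
  have f: "finite ?S" using assms unfolding c00_def by simp
  have "LL \<mu> (\<lambda>n. a * x n) = (\<Sum>n\<in>?S. \<bar>a * x n\<bar> * \<mu> (unitQ n))"
    by (rule LL_eq[OF f]) auto
  also have "\<dots> = \<bar>a\<bar> * LL \<mu> x"
    by (simp add: LL_eq[OF f] sum_distrib_left abs_mult mult.assoc)
  finally show ?thesis .
qed

lemma LL_swap: assumes "x \<in> c00" "y \<in> c00" shows "LL \<mu> (\<lambda>n. x n - y n) = LL \<mu> (\<lambda>n. y n - x n)"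
  using LL_scale[OF c00_diff[OF assms(2,1)], where a="-1" and \<mu>=\<mu>] by simp

lemma mu_le_LL: assumes "\<mu> \<in> PP" "u \<in> VV" shows "\<mu> u \<le> LL \<mu> (emb u)"
proof -
  have s: "is_seminorm_V \<mu>" using PP_sem[OF assms(1)] .
  have "\<mu> u \<le> (\<Sum>n\<in>{n. u n \<noteq> 0}. \<bar>of_rat (u n)\<bar> * \<mu> (\<lambda>m. if m = n then 1 else 0))"
  proof (rule sn_bound[where h = "\<lambda>q. \<bar>of_rat q\<bar>"])
    show "\<mu> (\<lambda>n. u n + v n) \<le> \<mu> u + \<mu> v" if "finite {n. u n \<noteq> 0}" "finite {n. v n \<noteq> 0}" for u v
      using s that unfolding is_seminorm_V_def VV_def by blast
    show "\<mu> (\<lambda>n. a * u n) = \<bar>of_rat a\<bar> * \<mu> u" if "finite {n. u n \<noteq> 0}" for u a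
      using s that unfolding is_seminorm_V_def VV_def by blast
    show "finite {n. u n \<noteq> 0}" using assms(2) unfolding VV_def by simp
  qed auto
  also have "\<dots> = LL \<mu> (emb u)"
    unfolding LL_def supp_emb by (simp add: emb_def unitQ_def)
  finally show ?thesis .
qed

lemma sem_le_LL: assumes "is_seminorm_c00 \<nu>" "\<forall>u\<in>VV. \<nu> (emb u) = \<mu> u" "x \<in> c00"
  shows "\<nu> x \<le> LL \<mu> x"
proof -
  have "\<nu> x \<le> (\<Sum>n\<in>{n. x n \<noteq> 0}. \<bar>x n\<bar> * \<nu> (\<lambda>m. if m = n then 1 else 0))"
  proof (rule sn_bound[where h = "abs"])
    show "\<nu> (\<lambda>n. u n + v n) \<le> \<nu> u + \<nu> v" if "finite {n. u n \<noteq> 0}" "finite {n. v n \<noteq> 0}" for u v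
      using assms(1) that unfolding is_seminorm_c00_def c00_def by blast
    show "\<nu> (\<lambda>n. a * u n) = \<bar>a\<bar> * \<nu> u" if "finite {n. u n \<noteq> 0}" for u a
      using assms(1) that unfolding is_seminorm_c00_def c00_def by blast
    show "finite {n. x n \<noteq> 0}" using assms(3) unfolding c00_def by simp
  qed auto
  also have "\<dots> = LL \<mu> x"
    unfolding LL_def using assms(2) unitQ_VV emb_unitQ by (intro sum.cong refl) metis
  finally show ?thesis .
qed

lemma sem_lip: assumes "is_seminorm_c00 \<nu>" "\<forall>u\<in>VV. \<nu> (emb u) = \<mu> u" "x \<in> c00" "y \<in> c00"
  shows "\<nu> x \<le> \<nu> y + LL \<mu> (\<lambda>n. x n - y n)"
proof -
  have "\<nu> (\<lambda>n. y n + (x n - y n)) \<le> \<nu> y + \<nu> (\<lambda>n. x n - y n)"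
    by (rule nu_tri[OF assms(1,4) c00_diff[OF assms(3,4)]])
  moreover have "\<nu> (\<lambda>n. x n - y n) \<le> LL \<mu> (\<lambda>n. x n - y n)"
    by (rule sem_le_LL[OF assms(1,2) c00_diff[OF assms(3,4)]])
  ultimately show ?thesis by simp
qed


definition AS :: "((nat \<Rightarrow> rat) \<Rightarrow> real) \<Rightarrow> (nat \<Rightarrow> real) \<Rightarrow> real set" where
  "AS \<mu> x = {\<mu> q + LL \<mu> (\<lambda>n. x n - emb q n) | q. q \<in> VV}"

definition nu0 :: "((nat \<Rightarrow> rat) \<Rightarrow> real) \<Rightarrow> (nat \<Rightarrow> real) \<Rightarrow> real" where
  "nu0 \<mu> x = (if x \<in> c00 then Inf (AS \<mu> x) else 0)"

lemma AS_ne: "AS \<mu> x \<noteq> {}" unfolding AS_def using VV_zero by blast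

lemma AS_bdd: assumes "\<mu> \<in> PP" shows "bdd_below (AS \<mu> x)"
  unfolding AS_def bdd_below_def
  by (rule exI[of _ 0]) (auto intro!: add_nonneg_nonneg mu_nonneg[OF assms] LL_nonneg[OF assms])

lemma nu0_le: assumes "\<mu> \<in> PP" "x \<in> c00" "q \<in> VV"
  shows "nu0 \<mu> x \<le> \<mu> q + LL \<mu> (\<lambda>n. x n - emb q n)"
proof -
  have "\<mu> q + LL \<mu> (\<lambda>n. x n - emb q n) \<in> AS \<mu> x" unfolding AS_def using assms(3) by blast
  then show ?thesis using assms(2) by (simp add: nu0_def cInf_lower AS_bdd[OF assms(1)])
qed

lemma nu0_ge: assumes "x \<in> c00" "\<And>q. q \<in> VV \<Longrightarrow> c \<le> \<mu> q + LL \<mu> (\<lambda>n. x n - emb q n)"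
  shows "c \<le> nu0 \<mu> x"
proof -
  have "c \<le> Inf (AS \<mu> x)" by (rule cInf_greatest[OF AS_ne]) (auto simp: AS_def intro: assms(2))
  then show ?thesis using assms(1) by (simp add: nu0_def)
qed

lemma nu0_nonneg: assumes "\<mu> \<in> PP" shows "nu0 \<mu> x \<ge> 0"
proof (cases "x \<in> c00")
  case True
  show ?thesis by (rule nu0_ge[OF True]) (auto intro!: add_nonneg_nonneg mu_nonneg[OF assms] LL_nonneg[OF assms])
qed (simp add: nu0_def)

lemma nu0_emb: assumes "\<mu> \<in> PP" "u \<in> VV" shows "nu0 \<mu> (emb u) = \<mu> u"
proof (rule antisym)
  show "nu0 \<mu> (emb u) \<le> \<mu> u" using nu0_le[OF assms(1) emb_c00[OF assms(2)] assms(2)] by (simp add: LL_zero)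
  show "\<mu> u \<le> nu0 \<mu> (emb u)"
  proof (rule nu0_ge[OF emb_c00[OF assms(2)]])
    fix q assume q: "q \<in> VV"
    have d: "(\<lambda>n. u n - q n) \<in> VV" by (rule VV_diff[OF assms(2) q])
    have "\<mu> (\<lambda>n. q n + (\<lambda>n. u n - q n) n) \<le> \<mu> q + \<mu> (\<lambda>n. u n - q n)" by (rule mu_tri[OF assms(1) q d])
    also have "\<mu> (\<lambda>n. u n - q n) \<le> LL \<mu> (emb (\<lambda>n. u n - q n))" by (rule mu_le_LL[OF assms(1) d])
    finally show "\<mu> u \<le> \<mu> q + LL \<mu> (\<lambda>n. emb u n - emb q n)" by (simp add: emb_diff)
  qed
qed

lemma nu0_lip: assumes "\<mu> \<in> PP" "x \<in> c00" "y \<in> c00"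
  shows "nu0 \<mu> x \<le> nu0 \<mu> y + LL \<mu> (\<lambda>n. x n - y n)"
proof -
  have "nu0 \<mu> x - LL \<mu> (\<lambda>n. x n - y n) \<le> nu0 \<mu> y"
  proof (rule nu0_ge[OF assms(3)])
    fix q assume q: "q \<in> VV"
    have "nu0 \<mu> x \<le> \<mu> q + LL \<mu> (\<lambda>n. x n - emb q n)" by (rule nu0_le[OF assms(1,2) q])
    also have "LL \<mu> (\<lambda>n. x n - emb q n) = LL \<mu> (\<lambda>n. (x n - y n) + (y n - emb q n))" by simp
    also have "\<dots> \<le> LL \<mu> (\<lambda>n. x n - y n) + LL \<mu> (\<lambda>n. y n - emb q n)"
      by (rule LL_add[OF assms(1) c00_diff[OF assms(2,3)] c00_diff[OF assms(3) emb_c00[OF q]]])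
    finally show "nu0 \<mu> x - LL \<mu> (\<lambda>n. x n - y n) \<le> \<mu> q + LL \<mu> (\<lambda>n. y n - emb q n)" by simp
  qed
  then show ?thesis by simp
qed

lemma nu0_tri: assumes "\<mu> \<in> PP" "x \<in> c00" "y \<in> c00"
  shows "nu0 \<mu> (\<lambda>n. x n + y n) \<le> nu0 \<mu> x + nu0 \<mu> y"
proof -
  have xy: "(\<lambda>n. x n + y n) \<in> c00" by (rule c00_add[OF assms(2,3)])
  have "nu0 \<mu> (\<lambda>n. x n + y n) - nu0 \<mu> x \<le> nu0 \<mu> y"
  proof (rule nu0_ge[OF assms(3)])
    fix r assume r: "r \<in> VV"
    have "nu0 \<mu> (\<lambda>n. x n + y n) - (\<mu> r + LL \<mu> (\<lambda>n. y n - emb r n)) \<le> nu0 \<mu> x"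
    proof (rule nu0_ge[OF assms(2)])
      fix q assume q: "q \<in> VV"
      have qr: "(\<lambda>n. q n + r n) \<in> VV" by (rule VV_add[OF q r])
      have "nu0 \<mu> (\<lambda>n. x n + y n) \<le> \<mu> (\<lambda>n. q n + r n) + LL \<mu> (\<lambda>n. (x n + y n) - emb (\<lambda>n. q n + r n) n)"
        by (rule nu0_le[OF assms(1) xy qr])
      also have "\<mu> (\<lambda>n. q n + r n) \<le> \<mu> q + \<mu> r" by (rule mu_tri[OF assms(1) q r])
      also have "LL \<mu> (\<lambda>n. (x n + y n) - emb (\<lambda>n. q n + r n) n) = LL \<mu> (\<lambda>n. (x n - emb q n) + (y n - emb r n))"
        by (simp add: emb_def of_rat_add algebra_simps)
      also have "\<dots> \<le> LL \<mu> (\<lambda>n. x n - emb q n) + LL \<mu> (\<lambda>n. y n - emb r n)"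
        by (rule LL_add[OF assms(1) c00_diff[OF assms(2) emb_c00[OF q]] c00_diff[OF assms(3) emb_c00[OF r]]])
      finally show "nu0 \<mu> (\<lambda>n. x n + y n) - (\<mu> r + LL \<mu> (\<lambda>n. y n - emb r n)) \<le> \<mu> q + LL \<mu> (\<lambda>n. x n - emb q n)"
        by simp
    qed
    then show "nu0 \<mu> (\<lambda>n. x n + y n) - nu0 \<mu> x \<le> \<mu> r + LL \<mu> (\<lambda>n. y n - emb r n)" by simp
  qed
  then show ?thesis by simp
qed

lemma nu0_hom_rat: assumes "\<mu> \<in> PP" "x \<in> c00"
  shows "nu0 \<mu> (\<lambda>n. of_rat s * x n) \<le> \<bar>of_rat s\<bar> * nu0 \<mu> x"
proof (cases "s = 0")
  case True
  then show ?thesis using nu0_le[OF assms(1) c00_zero VV_zero] by (simp add: mu_zero[OF assms(1)] emb_zero LL_zero)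
next
  case False
  have sx: "(\<lambda>n. of_rat s * x n) \<in> c00" by (rule c00_scale[OF assms(2)])
  have pos: "\<bar>of_rat s\<bar> > (0::real)" using False by simp
  have "nu0 \<mu> (\<lambda>n. of_rat s * x n) / \<bar>of_rat s\<bar> \<le> nu0 \<mu> x"
  proof (rule nu0_ge[OF assms(2)])
    fix q assume q: "q \<in> VV"
    have sq: "(\<lambda>n. s * q n) \<in> VV" by (rule VV_scale[OF q])
    have "nu0 \<mu> (\<lambda>n. of_rat s * x n) \<le> \<mu> (\<lambda>n. s * q n) + LL \<mu> (\<lambda>n. of_rat s * x n - emb (\<lambda>n. s * q n) n)"
      by (rule nu0_le[OF assms(1) sx sq])
    also have "LL \<mu> (\<lambda>n. of_rat s * x n - emb (\<lambda>n. s * q n) n) = LL \<mu> (\<lambda>n. of_rat s * (x n - emb q n))"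
      by (simp add: emb_def of_rat_mult algebra_simps)
    also have "\<dots> = \<bar>of_rat s\<bar> * LL \<mu> (\<lambda>n. x n - emb q n)"
      by (rule LL_scale[OF c00_diff[OF assms(2) emb_c00[OF q]]])
    also have "\<mu> (\<lambda>n. s * q n) = \<bar>of_rat s\<bar> * \<mu> q" by (rule mu_hom[OF assms(1) q])
    finally show "nu0 \<mu> (\<lambda>n. of_rat s * x n) / \<bar>of_rat s\<bar> \<le> \<mu> q + LL \<mu> (\<lambda>n. x n - emb q n)"
      using pos by (simp add: divide_le_eq algebra_simps)
  qed
  then show ?thesis using pos by (simp add: divide_le_eq mult.commute)
qed

lemma nu0_hom_le: assumes "\<mu> \<in> PP" "x \<in> c00"
  shows "nu0 \<mu> (\<lambda>n. a * x n) \<le> \<bar>a\<bar> * nu0 \<mu> x"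
proof (rule field_le_epsilon)
  fix e :: real assume e: "0 < e"
  define M where "M = nu0 \<mu> x + LL \<mu> x + 1"
  have M: "M > 0" unfolding M_def using nu0_nonneg[OF assms(1)] LL_nonneg[OF assms(1)]
    by (smt (verit))
  obtain r where r: "r \<in> \<rat>" "a - e / M < r" "r < a"
    using Rats_dense_in_real[of "a - e/M" a] e M by auto
  obtain s where s: "r = of_rat s" using r(1) Rats_cases by blast
  have ax: "(\<lambda>n. a * x n) \<in> c00" by (rule c00_scale[OF assms(2)])
  have rx: "(\<lambda>n. r * x n) \<in> c00" by (rule c00_scale[OF assms(2)])
  have "nu0 \<mu> (\<lambda>n. a * x n) \<le> nu0 \<mu> (\<lambda>n. r * x n) + LL \<mu> (\<lambda>n. a * x n - r * x n)"
    by (rule nu0_lip[OF assms(1) ax rx])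
  also have "LL \<mu> (\<lambda>n. a * x n - r * x n) = LL \<mu> (\<lambda>n. (a - r) * x n)" by (simp add: algebra_simps)
  also have "\<dots> = \<bar>a - r\<bar> * LL \<mu> x" by (rule LL_scale[OF assms(2)])
  also have "nu0 \<mu> (\<lambda>n. r * x n) \<le> \<bar>r\<bar> * nu0 \<mu> x" using nu0_hom_rat[OF assms, of s] s by simp
  finally have 1: "nu0 \<mu> (\<lambda>n. a * x n) \<le> \<bar>r\<bar> * nu0 \<mu> x + \<bar>a - r\<bar> * LL \<mu> x" by simp
  have "\<bar>r\<bar> \<le> \<bar>a\<bar> + \<bar>a - r\<bar>" by simp
  then have "\<bar>r\<bar> * nu0 \<mu> x \<le> (\<bar>a\<bar> + \<bar>a - r\<bar>) * nu0 \<mu> x"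
    by (rule mult_right_mono) (rule nu0_nonneg[OF assms(1)])
  with 1 have 2: "nu0 \<mu> (\<lambda>n. a * x n) \<le> \<bar>a\<bar> * nu0 \<mu> x + \<bar>a - r\<bar> * (nu0 \<mu> x + LL \<mu> x)"
    by (simp add: algebra_simps)
  have "\<bar>a - r\<bar> * (nu0 \<mu> x + LL \<mu> x) \<le> (e / M) * M"
    using r M nu0_nonneg[OF assms(1)] LL_nonneg[OF assms(1)] unfolding M_def
    by (intro mult_mono) auto
  also have "\<dots> = e" using M by simp
  finally show "nu0 \<mu> (\<lambda>n. a * x n) \<le> \<bar>a\<bar> * nu0 \<mu> x + e" using 2 by simp
qed

lemma nu0_hom: assumes "\<mu> \<in> PP" "x \<in> c00"
  shows "nu0 \<mu> (\<lambda>n. a * x n) = \<bar>a\<bar> * nu0 \<mu> x"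
proof (cases "a = 0")
  case True
  then show ?thesis using nu0_hom_le[OF assms, of 0] nu0_nonneg[OF assms(1)] by (simp add: antisym)
next
  case False
  have ax: "(\<lambda>n. a * x n) \<in> c00" by (rule c00_scale[OF assms(2)])
  have "nu0 \<mu> (\<lambda>n. inverse a * (a * x n)) \<le> \<bar>inverse a\<bar> * nu0 \<mu> (\<lambda>n. a * x n)"
    by (rule nu0_hom_le[OF assms(1) ax])
  moreover have "(\<lambda>n. inverse a * (a * x n)) = x" using False by (auto simp: field_simps)
  ultimately have "nu0 \<mu> x \<le> \<bar>inverse a\<bar> * nu0 \<mu> (\<lambda>n. a * x n)" by simp
  then have "\<bar>a\<bar> * nu0 \<mu> x \<le> nu0 \<mu> (\<lambda>n. a * x n)" using False
    by (simp add: field_simps abs_inverse)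
  then show ?thesis using nu0_hom_le[OF assms, of a] by simp
qed

lemma nu0_sem: assumes "\<mu> \<in> PP" shows "is_seminorm_c00 (nu0 \<mu>)"
  unfolding is_seminorm_c00_def using nu0_tri[OF assms] nu0_hom[OF assms] by (auto simp: nu0_def)


lemma approx: assumes "\<mu> \<in> PP" "x \<in> c00" "e > 0"
  shows "\<exists>q\<in>VV. LL \<mu> (\<lambda>n. x n - emb q n) < e"
proof -
  define S where "S = {n. x n \<noteq> 0}"
  have fS: "finite S" using assms(2) unfolding S_def c00_def by simp
  define C where "C = (\<Sum>n\<in>S. \<mu> (unitQ n)) + 1"
  have C0: "(\<Sum>n\<in>S. \<mu> (unitQ n)) \<ge> 0" by (intro sum_nonneg unit_nonneg[OF assms(1)])
  then have C: "C > 0" unfolding C_def by simp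
  define d where "d = e / C"
  have d: "d > 0" unfolding d_def using C assms(3) by simp
  have "\<forall>n. \<exists>r::rat. \<bar>x n - of_rat r\<bar> < d"
  proof
    fix n
    obtain t where t: "t \<in> \<rat>" "x n - d < t" "t < x n" using Rats_dense_in_real[of "x n - d" "x n"] d by auto
    then obtain r where "t = of_rat r" using Rats_cases by blast
    then show "\<exists>r::rat. \<bar>x n - of_rat r\<bar> < d" using t by (intro exI[of _ r]) auto
  qed
  then obtain r where r: "\<And>n. \<bar>x n - of_rat (r n)\<bar> < d" by metis
  define q where "q = (\<lambda>n. if x n = 0 then 0 else r n)"
  have qV: "q \<in> VV" unfolding VV_def mem_Collect_eq
    by (rule rev_finite_subset[OF fS]) (auto simp: q_def S_def)
  have "LL \<mu> (\<lambda>n. x n - emb q n) = (\<Sum>n\<in>S. \<bar>x n - emb q n\<bar> * \<mu> (unitQ n))"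
    by (rule LL_eq[OF fS]) (auto simp: S_def q_def emb_def)
  also have "\<dots> \<le> (\<Sum>n\<in>S. d * \<mu> (unitQ n))"
  proof (intro sum_mono mult_right_mono unit_nonneg[OF assms(1)])
    fix n assume "n \<in> S"
    then show "\<bar>x n - emb q n\<bar> \<le> d" using r[of n] by (simp add: S_def q_def emb_def)
  qed
  also have "\<dots> = d * (C - 1)" by (simp add: C_def sum_distrib_left)
  also have "\<dots> < d * C" using d by simp
  also have "\<dots> = e" using C by (simp add: d_def)
  finally show ?thesis using qV by blast
qed

lemma sem_unique_le: assumes "\<mu> \<in> PP"
  and n1: "is_seminorm_c00 \<nu>1" "\<forall>u\<in>VV. \<nu>1 (emb u) = \<mu> u"
  and n2: "is_seminorm_c00 \<nu>2" "\<forall>u\<in>VV. \<nu>2 (emb u) = \<mu> u"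
  and x: "x \<in> c00"
  shows "\<nu>1 x \<le> \<nu>2 x"
proof (rule field_le_epsilon)
  fix e :: real assume e: "e > 0"
  obtain q where q: "q \<in> VV" "LL \<mu> (\<lambda>n. x n - emb q n) < e / 2" using approx[OF assms(1) x, of "e/2"] e by auto
  have "\<nu>1 x \<le> \<nu>1 (emb q) + LL \<mu> (\<lambda>n. x n - emb q n)" by (rule sem_lip[OF n1 x emb_c00[OF q(1)]])
  moreover have "\<nu>2 (emb q) \<le> \<nu>2 x + LL \<mu> (\<lambda>n. emb q n - x n)" by (rule sem_lip[OF n2 emb_c00[OF q(1)] x])
  moreover have "LL \<mu> (\<lambda>n. emb q n - x n) = LL \<mu> (\<lambda>n. x n - emb q n)" by (rule LL_swap[OF emb_c00[OF q(1)] x])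
  ultimately show "\<nu>1 x \<le> \<nu>2 x + e" using q n1(2) n2(2) by force
qed

lemma mu_bar_eq: assumes "\<mu> \<in> PP" shows "mu_bar \<mu> = nu0 \<mu>"
  unfolding mu_bar_def
proof (rule the_equality)
  show "is_seminorm_c00 (nu0 \<mu>) \<and> (\<forall>u\<in>VV. nu0 \<mu> (emb u) = \<mu> u)"
    using nu0_sem[OF assms] nu0_emb[OF assms] by blast
  fix \<nu> assume H: "is_seminorm_c00 \<nu> \<and> (\<forall>u\<in>VV. \<nu> (emb u) = \<mu> u)"
  show "\<nu> = nu0 \<mu>"
  proof
    fix x show "\<nu> x = nu0 \<mu> x"
    proof (cases "x \<in> c00")
      case True
      have s0: "is_seminorm_c00 (nu0 \<mu>)" "\<forall>u\<in>VV. nu0 \<mu> (emb u) = \<mu> u"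
        using nu0_sem[OF assms] nu0_emb[OF assms] by blast+
      show ?thesis using sem_unique_le[OF assms _ _ s0 True, of \<nu>] sem_unique_le[OF assms s0 _ _ True, of \<nu>] H
        by (simp add: antisym)
    next
      case False
      then show ?thesis using H unfolding is_seminorm_c00_def by (simp add: nu0_def)
    qed
  qed
qed

lemma mu_bar_sem: "\<mu> \<in> PP \<Longrightarrow> is_seminorm_c00 (mu_bar \<mu>)"
  using mu_bar_eq nu0_sem by metis
lemma mu_bar_emb: "\<mu> \<in> PP \<Longrightarrow> u \<in> VV \<Longrightarrow> mu_bar \<mu> (emb u) = \<mu> u"
  using mu_bar_eq nu0_emb by metis


definition lin_cond :: "((nat \<Rightarrow> rat) \<Rightarrow> real) \<Rightarrow> ((nat \<Rightarrow> rat) \<Rightarrow> real) \<Rightarrow> bool" where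
  "lin_cond \<mu> g \<longleftrightarrow> g (\<lambda>_. 0) = 0 \<and>
     (\<forall>u\<in>VV. \<forall>v\<in>VV. \<forall>a b. g (\<lambda>n. a * u n + b * v n) * \<mu> (\<lambda>n. a * u n + b * v n)
        = of_rat a * (g u * \<mu> u) + of_rat b * (g v * \<mu> v))"

lemma G_expand: assumes "\<mu> \<in> PP" "lin_cond \<mu> g" "finite S" "u \<in> VV" "{n. u n \<noteq> 0} \<subseteq> S"
  shows "g u * \<mu> u = (\<Sum>n\<in>S. of_rat (u n) * (g (unitQ n) * \<mu> (unitQ n)))"
  using assms(3-5)
proof (induction S arbitrary: u rule: finite_induct)
  case empty
  then have "u = (\<lambda>_. 0)" by auto
  then show ?case using assms(2) mu_zero[OF assms(1)] by (simp add: lin_cond_def)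
next
  case (insert i S u)
  define u' where "u' = (\<lambda>n. if n = i then 0 else u n)"
  have u'V: "u' \<in> VV" using insert(4) unfolding VV_def u'_def mem_Collect_eq
    by (rule rev_finite_subset) auto
  have u: "u = (\<lambda>n. 1 * u' n + u i * unitQ i n)" unfolding u'_def unitQ_def by auto
  have "g u * \<mu> u = of_rat 1 * (g u' * \<mu> u') + of_rat (u i) * (g (unitQ i) * \<mu> (unitQ i))"
  proof -
    have lc: "\<And>u v a b. u \<in> VV \<Longrightarrow> v \<in> VV \<Longrightarrow> g (\<lambda>n. a * u n + b * v n) * \<mu> (\<lambda>n. a * u n + b * v n)
        = of_rat a * (g u * \<mu> u) + of_rat b * (g v * \<mu> v)" using assms(2) unfolding lin_cond_def by blast
    have "g (\<lambda>n. 1 * u' n + u i * unitQ i n) * \<mu> (\<lambda>n. 1 * u' n + u i * unitQ i n)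
       = of_rat 1 * (g u' * \<mu> u') + of_rat (u i) * (g (unitQ i) * \<mu> (unitQ i))"
      by (rule lc[OF u'V unitQ_VV])
    then show ?thesis by (simp only: u[symmetric])
  qed
  also have "g u' * \<mu> u' = (\<Sum>n\<in>S. of_rat (u' n) * (g (unitQ n) * \<mu> (unitQ n)))"
  proof (rule insert(3)[OF u'V])
    show "{n. u' n \<noteq> 0} \<subseteq> S" using insert(5) unfolding u'_def by auto
  qed
  also have "(\<Sum>n\<in>S. of_rat (u' n) * (g (unitQ n) * \<mu> (unitQ n))) = (\<Sum>n\<in>S. of_rat (u n) * (g (unitQ n) * \<mu> (unitQ n)))"
    using insert(2) unfolding u'_def by (intro sum.cong) auto
  finally show ?case using insert(1,2) by (simp add: add.commute)
qed

definition fF :: "((nat \<Rightarrow> rat) \<Rightarrow> real) \<Rightarrow> ((nat \<Rightarrow> rat) \<Rightarrow> real) \<Rightarrow> (nat \<Rightarrow> real) \<Rightarrow> real" where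
  "fF \<mu> g x = (\<Sum>n\<in>{n. x n \<noteq> 0}. x n * (g (unitQ n) * \<mu> (unitQ n)))"

lemma fF_eq: assumes "finite S" "{n. x n \<noteq> 0} \<subseteq> S"
  shows "fF \<mu> g x = (\<Sum>n\<in>S. x n * (g (unitQ n) * \<mu> (unitQ n)))"
  unfolding fF_def by (rule sum.mono_neutral_left) (use assms in auto)

lemma fF_lin: assumes "x \<in> c00" "y \<in> c00"
  shows "fF \<mu> g (\<lambda>n. a * x n + b * y n) = a * fF \<mu> g x + b * fF \<mu> g y"
proof -
  let ?S = "{n. x n \<noteq> 0} \<union> {n. y n \<noteq> 0}"
  have f: "finite ?S" using assms unfolding c00_def by simp
  have "fF \<mu> g (\<lambda>n. a * x n + b * y n) = (\<Sum>n\<in>?S. (a * x n + b * y n) * (g (unitQ n) * \<mu> (unitQ n)))"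
    by (rule fF_eq[OF f]) auto
  also have "\<dots> = a * fF \<mu> g x + b * fF \<mu> g y"
    by (simp add: fF_eq[OF f] sum.distrib sum_distrib_left algebra_simps)
  finally show ?thesis .
qed

lemma fF_emb: assumes "\<mu> \<in> PP" "lin_cond \<mu> g" "u \<in> VV"
  shows "fF \<mu> g (emb u) = g u * \<mu> u"
proof -
  have f: "finite {n. u n \<noteq> 0}" using assms(3) unfolding VV_def by simp
  show ?thesis unfolding fF_def supp_emb
    using G_expand[OF assms(1,2) f assms(3) order_refl] by (simp add: emb_def)
qed

lemma cube_iff: "g \<in> topspace cube_top \<longleftrightarrow> g \<in> (\<Pi>\<^sub>E u\<in>VV. {-1..1})"
  unfolding cube_top_def by simp

lemma fF_LL: assumes "\<mu> \<in> PP" "g \<in> topspace cube_top" "x \<in> c00"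
  shows "\<bar>fF \<mu> g x\<bar> \<le> LL \<mu> x"
  unfolding fF_def LL_def
proof (rule order_trans[OF sum_abs], intro sum_mono)
  fix n
  have "g (unitQ n) \<in> {-1..1}" using assms(2) unitQ_VV unfolding cube_iff by blast
  then have "\<bar>g (unitQ n)\<bar> \<le> 1" by auto
  then have "\<bar>g (unitQ n) * \<mu> (unitQ n)\<bar> \<le> \<mu> (unitQ n)"
    using unit_nonneg[OF assms(1)] by (simp add: abs_mult mult_left_le_one_le)
  then show "\<bar>x n * (g (unitQ n) * \<mu> (unitQ n))\<bar> \<le> \<bar>x n\<bar> * \<mu> (unitQ n)"
    by (simp add: abs_mult mult_left_mono)
qed

lemma fF_bound: assumes "\<mu> \<in> PP" "g \<in> topspace cube_top" "lin_cond \<mu> g" "x \<in> c00"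
  shows "\<bar>fF \<mu> g x\<bar> \<le> mu_bar \<mu> x"
proof (rule field_le_epsilon)
  fix e :: real assume e: "e > 0"
  obtain q where q: "q \<in> VV" "LL \<mu> (\<lambda>n. x n - emb q n) < e / 2" using approx[OF assms(1,4), of "e/2"] e by auto
  have eq: "emb q \<in> c00" by (rule emb_c00[OF q(1)])
  have "fF \<mu> g (\<lambda>n. 1 * x n + (-1) * emb q n) = 1 * fF \<mu> g x + (-1) * fF \<mu> g (emb q)"
    by (rule fF_lin[OF assms(4) eq])
  then have d: "fF \<mu> g x = fF \<mu> g (emb q) + fF \<mu> g (\<lambda>n. x n - emb q n)" by simp
  have "\<bar>fF \<mu> g (\<lambda>n. x n - emb q n)\<bar> \<le> LL \<mu> (\<lambda>n. x n - emb q n)"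
    by (rule fF_LL[OF assms(1,2) c00_diff[OF assms(4) eq]])
  moreover have "\<bar>fF \<mu> g (emb q)\<bar> \<le> \<mu> q"
  proof -
    have "g q \<in> {-1..1}" using assms(2) q(1) unfolding cube_iff by blast
    then have "\<bar>g q\<bar> \<le> 1" by auto
    then have "\<bar>g q\<bar> * \<mu> q \<le> \<mu> q" using mu_nonneg[OF assms(1) q(1)]
      by (intro mult_left_le_one_le) auto
    then have "\<bar>g q * \<mu> q\<bar> \<le> \<mu> q" using mu_nonneg[OF assms(1) q(1)]
      by (simp add: abs_mult)
    then show ?thesis using fF_emb[OF assms(1,3) q(1)] by simp
  qed
  moreover have "mu_bar \<mu> (emb q) \<le> mu_bar \<mu> x + LL \<mu> (\<lambda>n. emb q n - x n)"
    by (rule sem_lip[OF mu_bar_sem[OF assms(1)] _ eq assms(4)]) (simp add: mu_bar_emb[OF assms(1)])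
  moreover have "LL \<mu> (\<lambda>n. emb q n - x n) = LL \<mu> (\<lambda>n. x n - emb q n)" by (rule LL_swap[OF eq assms(4)])
  ultimately show "\<bar>fF \<mu> g x\<bar> \<le> mu_bar \<mu> x + e" using d q(2) mu_bar_emb[OF assms(1) q(1)] by linarith
qed

lemma BB_PP: "\<mu> \<in> BB \<Longrightarrow> \<mu> \<in> PP" unfolding BB_def by simp

lemma BB_pos: assumes "\<mu> \<in> BB" "u \<in> VV" "u \<noteq> (\<lambda>_. 0)" shows "\<mu> u > 0"
proof -
  have P: "\<mu> \<in> PP" by (rule BB_PP[OF assms(1)])
  have "\<mu> u \<noteq> 0"
  proof
    assume "\<mu> u = 0"
    then have "mu_bar \<mu> (emb u) = 0" using mu_bar_emb[OF P assms(2)] by simp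
    then have "emb u = (\<lambda>_. 0)" using assms(1) emb_c00[OF assms(2)] unfolding BB_def by blast
    then have "u = (\<lambda>_. 0)" unfolding emb_def by (auto simp: fun_eq_iff)
    with assms(3) show False by simp
  qed
  then show ?thesis using mu_nonneg[OF P assms(2)] by simp
qed

lemma K_char: assumes "\<mu> \<in> BB" "g \<in> topspace cube_top"
  shows "g \<in> K_mu \<mu> \<longleftrightarrow> lin_cond \<mu> g"
proof
  have P: "\<mu> \<in> PP" by (rule BB_PP[OF assms(1)])
  assume "g \<in> K_mu \<mu>"
  then obtain f where f: "f \<in> dual_ball \<mu>" and g: "g = T_op \<mu> f" unfolding K_mu_def by blast
  have flin: "\<And>x y a b. x \<in> c00 \<Longrightarrow> y \<in> c00 \<Longrightarrow> f (\<lambda>n. a * x n + b * y n) = a * f x + b * f y"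
    using f unfolding dual_ball_def by blast
  have f0: "f (\<lambda>_. 0) = 0" using flin[OF c00_zero c00_zero, of 0 0] by simp
  have g0: "g (\<lambda>_. 0) = 0" unfolding g T_op_def using VV_zero by simp
  have G: "g u * \<mu> u = f (emb u)" if u: "u \<in> VV" for u
  proof (cases "u = (\<lambda>_. 0)")
    case True then show ?thesis using g0 f0 emb_zero by simp
  next
    case False
    have "\<mu> u > 0" by (rule BB_pos[OF assms(1) u False])
    then show ?thesis unfolding g T_op_def using u False by simp
  qed
  show "lin_cond \<mu> g" unfolding lin_cond_def
  proof (intro conjI ballI allI)
    show "g (\<lambda>_. 0) = 0" by (rule g0)
    fix u v a b assume u: "u \<in> VV" and v: "v \<in> VV"
    have "g (\<lambda>n. a * u n + b * v n) * \<mu> (\<lambda>n. a * u n + b * v n) = f (emb (\<lambda>n. a * u n + b * v n))"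
      by (rule G[OF VV_lin[OF u v]])
    also have "\<dots> = of_rat a * f (emb u) + of_rat b * f (emb v)"
      unfolding emb_lin by (rule flin[OF emb_c00[OF u] emb_c00[OF v]])
    finally show "g (\<lambda>n. a * u n + b * v n) * \<mu> (\<lambda>n. a * u n + b * v n) = of_rat a * (g u * \<mu> u) + of_rat b * (g v * \<mu> v)"
      using G[OF u] G[OF v] by simp
  qed
next
  have P: "\<mu> \<in> PP" by (rule BB_PP[OF assms(1)])
  assume L: "lin_cond \<mu> g"
  have fd: "fF \<mu> g \<in> dual_ball \<mu>"
    unfolding dual_ball_def using fF_lin fF_bound[OF P assms(2) L] by blast
  have "T_op \<mu> (fF \<mu> g) = g"
  proof
    fix u show "T_op \<mu> (fF \<mu> g) u = g u"
    proof (cases "u \<in> VV")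
      case True
      show ?thesis
      proof (cases "u = (\<lambda>_. 0)")
        case True2: True
        then show ?thesis using L True unfolding T_op_def lin_cond_def by simp
      next
        case False
        have "\<mu> u > 0" by (rule BB_pos[OF assms(1) True False])
        then show ?thesis using True False fF_emb[OF P L True] unfolding T_op_def by simp
      qed
    next
      case False
      have "g u = undefined" using assms(2) False unfolding cube_iff by (rule PiE_arb)
      moreover have "T_op \<mu> (fF \<mu> g) u = undefined" unfolding T_op_def using False by simp
      ultimately show ?thesis by simp
    qed
  qed
  then show "g \<in> K_mu \<mu>" unfolding K_mu_def by (rule image_eqI[OF sym fd])
qed


lemma BB_top: "BB \<subseteq> topspace RV_top" unfolding BB_def PP_def by auto

lemma cont_fst: assumes "w \<in> VV"
  shows "continuous_map (prod_topology (subtopology RV_top BB) cube_top) euclideanreal (\<lambda>p. fst p w)"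
proof -
  have "continuous_map (subtopology RV_top BB) euclideanreal (\<lambda>x. x w)"
    unfolding RV_top_def by (rule continuous_map_from_subtopology) (rule continuous_map_product_projection[OF assms])
  then show ?thesis using continuous_map_compose[OF continuous_map_fst] by (simp add: o_def)
qed

lemma cont_snd: assumes "w \<in> VV"
  shows "continuous_map (prod_topology (subtopology RV_top BB) cube_top) euclideanreal (\<lambda>p. snd p w)"
proof -
  have "continuous_map cube_top (top_of_set {-1..1}) (\<lambda>x. x w)"
    unfolding cube_top_def by (rule continuous_map_product_projection[OF assms])
  then have "continuous_map cube_top euclideanreal (\<lambda>x. x w)"
    by (rule continuous_map_into_fulltopology)
  then show ?thesis using continuous_map_compose[OF continuous_map_snd] by (simp add: o_def)
qed

theorem lemma4p1:
  shows "closedin (prod_topology (subtopology RV_top BB) cube_top) KK"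
proof -
  let ?X = "prod_topology (subtopology RV_top BB) cube_top"
  have tX: "topspace ?X = BB \<times> topspace cube_top" using BB_top by auto
  define E0 where "E0 = {p \<in> topspace ?X. snd p (\<lambda>_. 0) = 0}"
  define E where "E = (\<lambda>(u, v, a, b). {p \<in> topspace ?X.
      snd p (\<lambda>n. a * u n + b * v n) * fst p (\<lambda>n. a * u n + b * v n)
      = of_rat a * (snd p u * fst p u) + of_rat b * (snd p v * fst p v)})"
  let ?I = "VV \<times> VV \<times> (UNIV :: rat set) \<times> (UNIV :: rat set)"
  have KKeq: "KK = E0 \<inter> (\<Inter>i\<in>?I. E i)"
  proof (rule set_eqI)
    fix p :: "((nat \<Rightarrow> rat) \<Rightarrow> real) \<times> ((nat \<Rightarrow> rat) \<Rightarrow> real)"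
    obtain \<mu> g where p: "p = (\<mu>, g)" by (cases p)
    show "p \<in> KK \<longleftrightarrow> p \<in> E0 \<inter> (\<Inter>i\<in>?I. E i)"
    proof (cases "\<mu> \<in> BB \<and> g \<in> topspace cube_top")
      case True
      then have "p \<in> KK \<longleftrightarrow> lin_cond \<mu> g" unfolding KK_def p using K_char by auto
      also have "\<dots> \<longleftrightarrow> p \<in> E0 \<inter> (\<Inter>i\<in>?I. E i)"
        unfolding lin_cond_def E0_def E_def p tX using True by auto
      finally show ?thesis .
    next
      case False
      then show ?thesis unfolding KK_def E0_def p tX by auto
    qed
  qed
  have c0: "closedin ?X E0" unfolding E0_def
    by (rule closedin_continuous_maps_eq[OF Hausdorff_space_euclidean cont_snd[OF VV_zero]]) simp
  have c1: "closedin ?X (\<Inter>i\<in>?I. E i)"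
  proof (rule closedin_INT)
    show "?I \<noteq> {}" using VV_zero by blast
    fix i assume i: "i \<in> ?I"
    then obtain u v a b where iu: "i = (u, v, a, b)" and u: "u \<in> VV" and v: "v \<in> VV" by auto
    have w: "(\<lambda>n. a * u n + b * v n) \<in> VV" by (rule VV_lin[OF u v])
    show "closedin ?X (E i)" unfolding E_def iu split
      by (intro closedin_continuous_maps_eq[OF Hausdorff_space_euclidean] continuous_map_add
          continuous_map_real_mult cont_fst cont_snd u v w continuous_map_const[THEN iffD2]) auto
  qed
  show ?thesis unfolding KKeq by (rule closedin_Int[OF c0 c1])
qed

end
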